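(* Let $\mathcal{G}=(V,E)$ be a connected hypergraph on $n$ vertices with at least one pair of nonadjacent vertices, and let $\lambda=\frac{2\lambda_2(L_{\mathcal{G}})}{\lambda_n(L_{\mathcal{G}})+\lambda_2(L_{\mathcal{G}})}$. Then for any $S\subset V$, $$\frac{|\delta S|}{|S|}\ge(n-|S|)\,\frac{1-(1-\lambda)^2}{(1-\lambda)^2(n-|S|)+|S|}.$$ Moreover, if $|S|\le n/2$, then $$\frac{|\delta S|}{|S|}\ge\frac{2\lambda_n(L_{\mathcal{G}})\lambda_2(L_{\mathcal{G}})}{\lambda_n(L_{\mathcal{G}})^2+\lambda_2(L_{\mathcal{G}})^2}.$$
   Context: A hypergraph $\mathcal{G}=(V,E)$ has a finite vertex set $V$ and a set $E$ of subsets of $V$ (edges), each of cardinality at least $2$. Distinct vertices are adjacent if some edge contains both. The degree $d_i$ is the number of edges containing $i$. The Laplacian $L_{\mathcal{G}}$ has $(L_{\mathcal{G}})_{ii}=d_i$ and $(L_{\mathcal{G}})_{ij}=-\sum_{e\in E,\, i,j\in e}\frac{1}{|e|-1}$ for $i\ne j$, with eigenvalues $\lambda_1(L_{\mathcal{G}})\le\dots\le\lambda_n(L_{\mathcal{G}})$. The vertex boundary $\delta S$ is the set of vertices in $V\setminus S$ adjacent to some vertex of $S$. *)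

theory Defs
  imports "HOL-Analysis.Analysis" "HOL-Computational_Algebra.Polynomial" "HOL-Library.Multiset"
begin

text \<open>A hypergraph on the finite vertex type 'a (vertex set V = UNIV) with edge set E.\<close>
definition hypergraph :: "'a::finite set set \<Rightarrow> bool" where
  "hypergraph E \<longleftrightarrow> (\<forall>e\<in>E. card e \<ge> 2)"

definition hg_adj :: "'a set set \<Rightarrow> 'a \<Rightarrow> 'a \<Rightarrow> bool" where
  "hg_adj E i j \<longleftrightarrow> i \<noteq> j \<and> (\<exists>e\<in>E. i \<in> e \<and> j \<in> e)"

definition hg_connected :: "'a set set \<Rightarrow> bool" where
  "hg_connected E \<longleftrightarrow> (\<forall>i j. (hg_adj E)\<^sup>*\<^sup>* i j)"

definition hg_degree :: "'a set set \<Rightarrow> 'a \<Rightarrow> nat" where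
  "hg_degree E i = card {e\<in>E. i \<in> e}"

definition hg_laplacian :: "'a::finite set set \<Rightarrow> real^'a^'a" where
  "hg_laplacian E = (\<chi> i j. if i = j then real (hg_degree E i)
      else - (\<Sum>e\<in>{e\<in>E. i \<in> e \<and> j \<in> e}. 1 / (real (card e) - 1)))"

definition vertex_boundary :: "'a set set \<Rightarrow> 'a set \<Rightarrow> 'a set" where
  "vertex_boundary E S = {v. v \<notin> S \<and> (\<exists>u\<in>S. hg_adj E u v)}"

text \<open>Characteristic polynomial det(xI - A) and the eigenvalues (with multiplicity) in
  nondecreasing order; eig A k is the k-th smallest eigenvalue, 1-based.\<close>
definition charpoly :: "real^'n^'n \<Rightarrow> real poly" where
  "charpoly A = det (\<chi> i j. (if i = j then [:0, 1:] else 0) - [:A$i$j:])"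

definition eigenvalues_sorted :: "real^'n^'n \<Rightarrow> real list" where
  "eigenvalues_sorted A = sorted_list_of_multiset (proots (charpoly A))"

definition eig :: "real^'n^'n \<Rightarrow> nat \<Rightarrow> real" where
  "eig A k = eigenvalues_sorted A ! (k - 1)"

end

theory Submission
  imports Defs
begin
lemma sym_inner:
  fixes A :: "real^'n^'n"
  assumes "transpose A = A"
  shows "(A *v x) \<bullet> y = x \<bullet> (A *v y)"
proof -
  have s: "A$i$j = A$j$i" for i j using assms by (metis transpose_def vec_lambda_beta)
  have "(A *v x) \<bullet> y = (\<Sum>i\<in>UNIV. \<Sum>j\<in>UNIV. A$i$j * x$j * y$i)"
    by (simp add: inner_vec_def matrix_vector_mult_def sum_distrib_left sum_distrib_right mult_ac)
  also have "\<dots> = (\<Sum>j\<in>UNIV. \<Sum>i\<in>UNIV. A$i$j * x$j * y$i)" by (rule sum.swap)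
  also have "\<dots> = x \<bullet> (A *v y)"
    by (simp add: inner_vec_def matrix_vector_mult_def sum_distrib_left sum_distrib_right s mult_ac)
  finally show ?thesis .
qed

lemma quad_zero:
  fixes a b :: real
  assumes "\<And>s. 2 * s * a + s^2*b \<le> 0"
  shows "a = 0"
proof -
  define c where "c = \<bar>b\<bar> + 1"
  have c: "c > 0" "c \<ge> 1" "2*c + b \<ge> 2" unfolding c_def by auto
  have "2*(a/c)*a + (a/c)^2*b \<le> 0" using assms .
  hence "c^2 * (2*(a/c)*a + (a/c)^2*b) \<le> 0" using c by (simp add: mult_nonneg_nonpos)
  moreover have "c^2 * (2*(a/c)*a + (a/c)^2*b) = a^2 * (2*c + b)"
    using c by (simp add: field_simps power2_eq_square)
  ultimately have "a^2 * (2*c+b) \<le> 0" by simp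
  moreover have "a^2 * (2*c+b) \<ge> 0" using c by simp
  ultimately have "a^2 * (2*c+b) = 0" by linarith
  thus ?thesis using c by simp
qed

lemma spectral_sub:
  fixes A :: "real^'n^'n"
  assumes symA: "transpose A = A"
  shows "subspace W \<Longrightarrow> (\<forall>w\<in>W. A *v w \<in> W) \<Longrightarrow> \<exists>B. B \<subseteq> W \<and> finite B \<and> span B = W
     \<and> pairwise orthogonal B \<and> (\<forall>b\<in>B. norm b = 1 \<and> A *v b = (b \<bullet> (A *v b)) *\<^sub>R b)"
proof (induction "dim W" arbitrary: W rule: less_induct)
  case less
  note sub = less.prems(1) and inv = less.prems(2)
  show ?case
  proof (cases "W = {0}")
    case True then show ?thesis by (intro exI[of _ "{}"]) auto
  next
    case False
    then obtain w where w: "w \<in> W" "w \<noteq> 0" using sub subspace_0 by blast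
    define K where "K = sphere (0::real^'n) 1 \<inter> W"
    have "compact K" unfolding K_def using closed_subspace[OF sub]
      by (intro compact_Int_closed) auto
    moreover have "(1/norm w) *\<^sub>R w \<in> K" unfolding K_def using w sub
      by (simp add: subspace_mul)
    hence "K \<noteq> {}" by blast
    moreover have "continuous_on K (\<lambda>x. x \<bullet> (A *v x))"
      by (intro continuous_intros matrix_vector_mult_linear_continuous_on[THEN continuous_on_compose2[of UNIV]]) auto
    ultimately obtain x where x: "x \<in> K" "\<forall>y\<in>K. y \<bullet> (A *v y) \<le> x \<bullet> (A *v x)"
      using continuous_attains_sup by blast
    define \<mu> where "\<mu> = x \<bullet> (A *v x)"
    have xW: "x \<in> W" and nx: "norm x = 1" using x(1) unfolding K_def by auto
    have xx: "x \<bullet> x = 1" using nx by (simp add: norm_eq_1)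
    have bound: "z \<bullet> (A *v z) \<le> \<mu> * (z \<bullet> z)" if zW: "z \<in> W" for z
    proof (cases "z = 0")
      case True then show ?thesis by simp
    next
      case False
      define z' where "z' = (1/norm z) *\<^sub>R z"
      have "z' \<in> K" unfolding K_def z'_def using zW sub False by (simp add: subspace_mul)
      hence "z' \<bullet> (A *v z') \<le> \<mu>" using x(2) \<mu>_def by auto
      moreover have "z' \<bullet> (A *v z') = (z \<bullet> (A *v z)) / (norm z)^2"
        unfolding z'_def by (simp add: matrix_vector_mult_scaleR power2_eq_square)
      ultimately have "z \<bullet> (A *v z) \<le> \<mu> * (norm z)^2" using False
        by (simp add: divide_le_eq)
      thus ?thesis by (simp add: power2_norm_eq_inner)
    qed
    have orth: "v \<bullet> (A *v x) = 0" if vW: "v \<in> W" and vx: "v \<bullet> x = 0" for v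
    proof -
      have "2 * s * (v \<bullet> (A *v x)) + s^2*(v \<bullet> (A *v v) - \<mu> * (v \<bullet> v)) \<le> 0" for s
      proof -
        have zW: "x + s *\<^sub>R v \<in> W" using xW vW sub by (simp add: subspace_add subspace_mul)
        have e1: "(x + s *\<^sub>R v) \<bullet> (A *v (x + s *\<^sub>R v))
           = \<mu> + 2 * s * (v \<bullet> (A *v x)) + s^2 * (v \<bullet> (A *v v))"
          using sym_inner[OF symA, of v x]
          by (simp add: matrix_vector_right_distrib matrix_vector_mult_scaleR inner_add_left
              inner_add_right \<mu>_def inner_commute power2_eq_square algebra_simps)
        have e2: "(x + s *\<^sub>R v) \<bullet> (x + s *\<^sub>R v) = 1 + s^2 * (v \<bullet> v)"
          using xx vx by (simp add: inner_add_left inner_add_right inner_commute power2_eq_square)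
        have "(x + s *\<^sub>R v) \<bullet> (A *v (x + s *\<^sub>R v)) \<le> \<mu> * ((x + s *\<^sub>R v) \<bullet> (x + s *\<^sub>R v))"
          by (rule bound[OF zW])
        hence "\<mu> + 2 * s * (v \<bullet> (A *v x)) + s^2 * (v \<bullet> (A *v v)) \<le> \<mu> * (1 + s^2 * (v \<bullet> v))"
          unfolding e1 e2 .
        thus ?thesis by (simp add: algebra_simps)
      qed
      thus ?thesis using quad_zero by blast
    qed
    have eig: "A *v x = \<mu> *\<^sub>R x"
    proof -
      define v where "v = A *v x - \<mu> *\<^sub>R x"
      have vW: "v \<in> W" unfolding v_def using inv xW sub by (simp add: subspace_diff subspace_mul)
      have vx: "v \<bullet> x = 0" unfolding v_def using xx by (simp add: inner_diff_left inner_diff_right \<mu>_def inner_commute)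
      have "v \<bullet> v = v \<bullet> (A *v x) - \<mu> * (v \<bullet> x)" unfolding v_def
        by (simp add: inner_diff_right)
      also have "\<dots> = 0" using orth[OF vW vx] vx by simp
      finally show ?thesis unfolding v_def by simp
    qed
    define W' where "W' = {v\<in>W. v \<bullet> x = 0}"
    have subW': "subspace W'" unfolding W'_def subspace_def using sub
      by (auto simp: subspace_add subspace_mul subspace_0 inner_add_left)
    have invW': "\<forall>v\<in>W'. A *v v \<in> W'"
    proof
      fix v assume v: "v \<in> W'"
      have "(A *v v) \<bullet> x = v \<bullet> (A *v x)" by (rule sym_inner[OF symA])
      also have "\<dots> = 0" using v eig by (simp add: W'_def)
      finally show "A *v v \<in> W'" using v inv by (simp add: W'_def)
    qed
    have "x \<notin> W'" using xx unfolding W'_def by auto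
    moreover have "W' \<subseteq> W" unfolding W'_def by auto
    ultimately have "W' \<subset> W" using xW by blast
    hence "span W' \<subset> span W" by (metis real_vector.span_eq_iff subW' sub)
    hence "dim W' < dim W" by (rule dim_psubset)
    then obtain B' where B': "B' \<subseteq> W'" "finite B'" "span B' = W'" "pairwise orthogonal B'"
      "\<forall>b\<in>B'. norm b = 1 \<and> A *v b = (b \<bullet> (A *v b)) *\<^sub>R b"
      using less.hyps[OF _ subW' invW'] by blast
    have "span (insert x B') = W"
    proof
      show "span (insert x B') \<subseteq> W" using B'(1) xW sub unfolding W'_def
        by (intro span_minimal) auto
      show "W \<subseteq> span (insert x B')"
      proof
        fix v assume vW: "v \<in> W"
        have "v - (v \<bullet> x) *\<^sub>R x \<in> W'" unfolding W'_def using vW xW sub xx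
          by (simp add: subspace_diff subspace_mul inner_diff_left)
        hence "v - (v \<bullet> x) *\<^sub>R x \<in> span (insert x B')" using B'(3) span_mono[of B' "insert x B'"] by auto
        moreover have "(v \<bullet> x) *\<^sub>R x \<in> span (insert x B')" by (simp add: span_base span_mul)
        ultimately have "(v - (v \<bullet> x) *\<^sub>R x) + (v \<bullet> x) *\<^sub>R x \<in> span (insert x B')"
          by (rule span_add)
        thus "v \<in> span (insert x B')" by simp
      qed
    qed
    moreover have "pairwise orthogonal (insert x B')"
      using B'(1,4) unfolding pairwise_def orthogonal_def W'_def by (auto simp: inner_commute)
    moreover have "\<forall>b\<in>insert x B'. norm b = 1 \<and> A *v b = (b \<bullet> (A *v b)) *\<^sub>R b"
      using B'(5) nx eig \<mu>_def by auto
    ultimately show ?thesis using B'(1,2) xW unfolding W'_def by (intro exI[of _ "insert x B'"]) auto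
  qed
qed

lemma lap_entry:
  "hg_laplacian E $ i $ j = (if i = j then real (hg_degree E i)
      else - (\<Sum>e\<in>{e\<in>E. i \<in> e \<and> j \<in> e}. 1 / (real (card e) - 1)))"
  by (simp add: hg_laplacian_def)

lemma lap_sym:
  fixes E :: "'a::finite set set"
  shows "transpose (hg_laplacian E) = hg_laplacian E"
proof -
  have "{e\<in>E. i \<in> e \<and> j \<in> e} = {e\<in>E. j \<in> e \<and> i \<in> e}" for i j by auto
  thus ?thesis by (auto simp: vec_eq_iff transpose_def lap_entry)
qed

lemma lap_offdiag_nonpos:
  fixes E :: "'a::finite set set"
  assumes hg: "hypergraph E" and ij: "i \<noteq> j"
  shows "hg_laplacian E $ i $ j \<le> 0"
proof -
  have "(\<Sum>e\<in>{e\<in>E. i \<in> e \<and> j \<in> e}. 1 / (real (card e) - 1)) \<ge> 0"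
  proof (rule sum_nonneg)
    fix e assume "e \<in> {e\<in>E. i \<in> e \<and> j \<in> e}"
    hence "card e \<ge> 2" using hg unfolding hypergraph_def by auto
    thus "1 / (real (card e) - 1) \<ge> 0" by simp
  qed
  thus ?thesis using ij by (simp add: lap_entry)
qed

lemma lap_nonadj:
  fixes E :: "'a::finite set set"
  assumes ij: "i \<noteq> j" and na: "\<not> hg_adj E i j"
  shows "hg_laplacian E $ i $ j = 0"
proof -
  have h: "{e\<in>E. i \<in> e \<and> j \<in> e} = {}" using na ij unfolding hg_adj_def by auto
  have "hg_laplacian E $ i $ j = - (\<Sum>e\<in>{e\<in>E. i \<in> e \<and> j \<in> e}. 1 / (real (card e) - 1))"
    using ij by (simp add: lap_entry)
  also have "\<dots> = 0" unfolding h by simp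
  finally show ?thesis .
qed

lemma lap_rowsum:
  fixes E :: "'a::finite set set"
  assumes hg: "hypergraph E"
  shows "(\<Sum>j\<in>UNIV. hg_laplacian E $ i $ j) = 0"
proof -
  define w where "w e = 1 / (real (card e) - 1)" for e :: "'a set"
  define Ei where "Ei = {e\<in>E. i \<in> e}"
  have finE: "finite Ei" by simp
  have "(\<Sum>j\<in>UNIV. hg_laplacian E $ i $ j) = hg_laplacian E $ i $ i + (\<Sum>j\<in>UNIV-{i}. hg_laplacian E $ i $ j)"
    by (simp add: sum.remove)
  also have "(\<Sum>j\<in>UNIV-{i}. hg_laplacian E $ i $ j) = - (\<Sum>j\<in>UNIV-{i}. \<Sum>e\<in>Ei. if j \<in> e then w e else 0)"
  proof -
    have "hg_laplacian E $ i $ j = - (\<Sum>e\<in>Ei. if j \<in> e then w e else 0)" if "j \<in> UNIV-{i}" for j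
    proof -
      have "{e\<in>E. i \<in> e \<and> j \<in> e} = {e\<in>Ei. j \<in> e}" unfolding Ei_def by auto
      hence "(\<Sum>e\<in>{e\<in>E. i \<in> e \<and> j \<in> e}. w e) = (\<Sum>e\<in>Ei. if j \<in> e then w e else 0)"
        using sum.inter_filter[OF finE] by simp
      thus ?thesis using that by (simp add: lap_entry w_def)
    qed
    thus ?thesis by (simp add: sum_negf)
  qed
  also have "(\<Sum>j\<in>UNIV-{i}. \<Sum>e\<in>Ei. if j \<in> e then w e else 0) = (\<Sum>e\<in>Ei. \<Sum>j\<in>UNIV-{i}. if j \<in> e then w e else 0)"
    by (rule sum.swap)
  also have "\<dots> = (\<Sum>e\<in>Ei. 1)"
  proof (rule sum.cong[OF refl])
    fix e assume e: "e \<in> Ei"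
    hence c2: "card e \<ge> 2" and ie: "i \<in> e" using hg unfolding hypergraph_def Ei_def by auto
    have "(\<Sum>j\<in>UNIV-{i}. if j \<in> e then w e else 0) = (\<Sum>j\<in>{j\<in>UNIV-{i}. j \<in> e}. w e)"
      by (rule sum.inter_filter[symmetric]) simp
    also have "{j\<in>UNIV-{i}. j \<in> e} = e - {i}" by auto
    also have "(\<Sum>j\<in>e - {i}. w e) = real (card e - 1) * w e" using ie by simp
    also have "\<dots> = 1" using c2 by (simp add: w_def of_nat_diff)
    finally show "(\<Sum>j\<in>UNIV-{i}. if j \<in> e then w e else 0) = 1" .
  qed
  also have "hg_laplacian E $ i $ i = real (card Ei)" by (simp add: lap_entry hg_degree_def Ei_def)
  finally show ?thesis by simp
qed

lemma psd_lemma: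
  fixes A :: "real^'n^'n"
  assumes sym: "transpose A = A" and rs: "\<And>i. (\<Sum>j\<in>UNIV. A$i$j) = 0"
    and off: "\<And>i j. i \<noteq> j \<Longrightarrow> A$i$j \<le> 0"
  shows "x \<bullet> (A *v x) \<ge> 0"
proof -
  have s: "A$i$j = A$j$i" for i j using sym by (metis transpose_def vec_lambda_beta)
  have q: "x \<bullet> (A *v x) = (\<Sum>i\<in>UNIV. \<Sum>j\<in>UNIV. A$i$j * x$i * x$j)"
    by (simp add: inner_vec_def matrix_vector_mult_def sum_distrib_left mult_ac)
  have t1: "(\<Sum>i\<in>UNIV. \<Sum>j\<in>UNIV. A$i$j * (x$i)^2) = 0"
  proof -
    have "(\<Sum>i\<in>UNIV. \<Sum>j\<in>UNIV. A$i$j * (x$i)^2) = (\<Sum>i\<in>UNIV. (\<Sum>j\<in>UNIV. A$i$j) * (x$i)^2)"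
      by (simp add: sum_distrib_right)
    also have "\<dots> = 0" using rs by simp
    finally show ?thesis .
  qed
  have t3: "(\<Sum>i\<in>UNIV. \<Sum>j\<in>UNIV. A$i$j * (x$j)^2) = 0"
  proof -
    have "(\<Sum>i\<in>UNIV. \<Sum>j\<in>UNIV. A$i$j * (x$j)^2) = (\<Sum>j\<in>UNIV. \<Sum>i\<in>UNIV. A$i$j * (x$j)^2)"
      by (rule sum.swap)
    also have "\<dots> = (\<Sum>j\<in>UNIV. (\<Sum>i\<in>UNIV. A$j$i) * (x$j)^2)"
      by (simp add: sum_distrib_right s)
    also have "\<dots> = 0" using rs by simp
    finally show ?thesis .
  qed
  have "(\<Sum>i\<in>UNIV. \<Sum>j\<in>UNIV. A$i$j * (x$i - x$j)^2)
     = (\<Sum>i\<in>UNIV. \<Sum>j\<in>UNIV. A$i$j * (x$i)^2) + (\<Sum>i\<in>UNIV. \<Sum>j\<in>UNIV. A$i$j * (x$j)^2)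
       - 2 * (\<Sum>i\<in>UNIV. \<Sum>j\<in>UNIV. A$i$j * x$i * x$j)"
    by (simp add: power2_diff algebra_simps sum.distrib sum_subtractf sum_distrib_left)
  hence e: "(\<Sum>i\<in>UNIV. \<Sum>j\<in>UNIV. A$i$j * (x$i - x$j)^2) = - 2 * (x \<bullet> (A *v x))"
    using t1 t3 q by simp
  have "(\<Sum>i\<in>UNIV. \<Sum>j\<in>UNIV. A$i$j * (x$i - x$j)^2) \<le> 0"
  proof (intro sum_nonpos)
    fix i j
    show "A$i$j * (x$i - x$j)^2 \<le> 0"
      by (cases "i = j") (auto intro: mult_nonpos_nonneg off)
  qed
  thus ?thesis using e by simp
qed

lemma rowsum_one:
  fixes A :: "real^'n^'n"
  assumes rs: "\<And>i. (\<Sum>j\<in>UNIV. A$i$j) = 0"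
  shows "A *v vec 1 = 0"
  using rs by (simp add: vec_eq_iff matrix_vector_mult_def)

lemma parseval:
  fixes h :: "'n::finite \<Rightarrow> real^'n"
  assumes comp: "\<And>i j. (\<Sum>k\<in>UNIV. h k $ i * h k $ j) = (if i = j then 1 else 0)"
  shows "v \<bullet> w = (\<Sum>k\<in>UNIV. (v \<bullet> h k) * (w \<bullet> h k))"
proof -
  have "v \<bullet> w = (\<Sum>i\<in>UNIV. \<Sum>j\<in>UNIV. v$i * w$j * (if i = j then 1 else 0))"
    by (simp add: inner_vec_def if_distrib[of "\<lambda>x. _ * x"] cong: if_cong)
  also have "\<dots> = (\<Sum>i\<in>UNIV. \<Sum>j\<in>UNIV. \<Sum>k\<in>UNIV. v$i * w$j * (h k $ i * h k $ j))"
    by (simp add: comp[symmetric] sum_distrib_left)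
  also have "\<dots> = (\<Sum>i\<in>UNIV. \<Sum>k\<in>UNIV. \<Sum>j\<in>UNIV. v$i * w$j * (h k $ i * h k $ j))"
    by (rule sum.cong[OF refl], rule sum.swap)
  also have "\<dots> = (\<Sum>k\<in>UNIV. \<Sum>i\<in>UNIV. \<Sum>j\<in>UNIV. v$i * w$j * (h k $ i * h k $ j))"
    by (rule sum.swap)
  also have "\<dots> = (\<Sum>k\<in>UNIV. (v \<bullet> h k) * (w \<bullet> h k))"
    by (simp add: inner_vec_def sum_product mult_ac)
  finally show ?thesis .
qed

lemma eigen_setup:
  fixes A :: "real^'n^'n"
  assumes sym: "transpose A = A" and a1: "A *v vec 1 = 0"
  shows "\<exists>(h::'n \<Rightarrow> real^'n) \<mu> k0. (\<forall>k l. h k \<bullet> h l = (if k = l then 1 else 0))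
     \<and> (\<forall>k. A *v h k = \<mu> k *\<^sub>R h k)
     \<and> h k0 = (1 / sqrt (real CARD('n))) *\<^sub>R vec 1 \<and> \<mu> k0 = 0
     \<and> (\<forall>i j. (\<Sum>k\<in>UNIV. h k $ i * h k $ j) = (if i = j then 1 else 0))"
proof -
  define one :: "real^'n" where "one = vec 1"
  define N where "N = real CARD('n)"
  have N: "N > 0" unfolding N_def by simp
  define u where "u = (1 / sqrt N) *\<^sub>R one"
  have oo: "one \<bullet> one = N" unfolding one_def N_def by (simp add: inner_vec_def)
  have uu: "u \<bullet> u = 1" unfolding u_def using oo N by (simp add: power2_eq_square[symmetric])
  have uone: "u \<bullet> one \<noteq> 0" unfolding u_def using oo N by simp
  define W where "W = {v. v \<bullet> one = 0}"
  have subW: "subspace W" unfolding W_def subspace_def by (auto simp: inner_add_left)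
  have invW: "\<forall>w\<in>W. A *v w \<in> W"
  proof
    fix w assume "w \<in> W"
    hence "w \<bullet> one = 0" by (simp add: W_def)
    have "(A *v w) \<bullet> one = w \<bullet> (A *v one)" by (rule sym_inner[OF sym])
    also have "\<dots> = 0" using a1 by (simp add: one_def)
    finally show "A *v w \<in> W" by (simp add: W_def)
  qed
  obtain B' where B': "B' \<subseteq> W" "finite B'" "span B' = W" "pairwise orthogonal B'"
      "\<forall>b\<in>B'. norm b = 1 \<and> A *v b = (b \<bullet> (A *v b)) *\<^sub>R b"
    using spectral_sub[OF sym subW invW] by blast
  define B where "B = insert u B'"
  have uB': "u \<notin> B'" using B'(1) uone unfolding W_def by auto
  have Au: "A *v u = 0" unfolding u_def using a1 by (simp add: matrix_vector_mult_scaleR one_def)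
  have orthB: "pairwise orthogonal B"
    using B'(1,4) unfolding B_def pairwise_def orthogonal_def W_def u_def
    by (auto simp: inner_commute)
  have normB: "\<forall>b\<in>B. b \<bullet> b = 1"
    using B'(5) uu unfolding B_def by (auto simp: norm_eq_1)
  have eigB: "\<forall>b\<in>B. A *v b = (b \<bullet> (A *v b)) *\<^sub>R b"
    using B'(5) Au unfolding B_def by auto
  have "0 \<notin> B" using normB by auto
  hence indB: "independent B" using orthB pairwise_orthogonal_independent by blast
  have spanB: "span B = UNIV"
  proof -
    have "v \<in> span B" for v
    proof -
      have "v - ((v \<bullet> u) / (u \<bullet> u)) *\<^sub>R u \<in> W" unfolding W_def u_def
        using oo N by (simp add: inner_diff_left)
      hence "v - ((v \<bullet> u) / (u \<bullet> u)) *\<^sub>R u \<in> span B" using B'(3) span_mono[of B' B]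
        unfolding B_def by auto
      moreover have "((v \<bullet> u) / (u \<bullet> u)) *\<^sub>R u \<in> span B" unfolding B_def
        by (simp add: span_base span_mul)
      ultimately have "(v - ((v \<bullet> u) / (u \<bullet> u)) *\<^sub>R u) + ((v \<bullet> u) / (u \<bullet> u)) *\<^sub>R u \<in> span B"
        by (rule span_add)
      thus ?thesis by simp
    qed
    thus ?thesis by auto
  qed
  have finB: "finite B" using B'(2) unfolding B_def by simp
  have "dim (UNIV :: (real^'n) set) = card B"
    using dim_eq_card[of B UNIV] spanB indB by simp
  hence cardB: "card B = CARD('n)" by simp
  obtain h where h: "bij_betw h (UNIV::'n set) B"
    using finite_same_card_bij[of "UNIV::'n set" B] finB cardB by auto
  have hB: "h k \<in> B" for k using h by (auto simp: bij_betw_def)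
  have hinj: "h k = h l \<Longrightarrow> k = l" for k l using h by (auto simp: bij_betw_def inj_on_def)
  have "u \<in> range h" using h unfolding B_def bij_betw_def by auto
  then obtain k0 where k0: "h k0 = u" by auto
  define \<mu> where "\<mu> k = h k \<bullet> (A *v h k)" for k
  have ortho: "\<forall>k l. h k \<bullet> h l = (if k = l then 1 else 0)"
  proof (intro allI)
    fix k l
    show "h k \<bullet> h l = (if k = l then 1 else 0)"
    proof (cases "k = l")
      case True thus ?thesis using normB hB by simp
    next
      case False
      hence "h k \<noteq> h l" using hinj by blast
      thus ?thesis using False orthB hB unfolding pairwise_def orthogonal_def by auto
    qed
  qed
  have eig: "\<forall>k. A *v h k = \<mu> k *\<^sub>R h k" using eigB hB unfolding \<mu>_def by auto
  have mu0: "\<mu> k0 = 0" unfolding \<mu>_def k0 Au by simp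
  define Q :: "real^'n^'n" where "Q = (\<chi> i k. h k $ i)"
  have "transpose Q ** Q = mat 1"
    using ortho by (simp add: vec_eq_iff Q_def matrix_matrix_mult_def transpose_def mat_def inner_vec_def)
  hence "Q ** transpose Q = mat 1" by (rule matrix_left_right_inverse1)
  hence comp: "\<forall>i j. (\<Sum>k\<in>UNIV. h k $ i * h k $ j) = (if i = j then 1 else 0)"
    by (simp add: vec_eq_iff Q_def matrix_matrix_mult_def transpose_def mat_def)
  show ?thesis using ortho eig k0 mu0 comp unfolding u_def N_def one_def
    by (intro exI[of _ h] exI[of _ \<mu>] exI[of _ k0]) simp
qed

lemma psum2: "(\<Sum>k\<in>K. [:a k, b k:]) = [:\<Sum>k\<in>K. a k, \<Sum>k\<in>K. b k:]"
  by (auto simp: poly_eq_iff coeff_sum coeff_pCons split: nat.split)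

lemma psum1: "(\<Sum>k\<in>K. [:a k:]) = [:\<Sum>k\<in>K. a k:]"
  by (auto simp: poly_eq_iff coeff_sum coeff_pCons split: nat.split)

lemma pprod3: "[:a:] * [:b, c:] * [:d::real:] = [:a*b*d, a*c*d:]"
  by (simp add: mult_pCons_left mult_pCons_right algebra_simps)

lemma charpoly_diag:
  fixes A :: "real^'n^'n" and h :: "'n \<Rightarrow> real^'n"
  assumes eig: "\<forall>k. A *v h k = \<mu> k *\<^sub>R h k"
    and comp: "\<forall>i j. (\<Sum>k\<in>UNIV. h k $ i * h k $ j) = (if i = j then 1 else 0)"
  shows "charpoly A = (\<Prod>k\<in>UNIV. [:- \<mu> k, 1:])"
proof -
  have Aent: "A$i$j = (\<Sum>k\<in>UNIV. h k $ i * \<mu> k * h k $ j)" for i j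
  proof -
    have "(\<Sum>m\<in>UNIV. A$i$m * (if m = j then 1 else 0)) = (\<Sum>m\<in>UNIV. if m = j then A$i$m else 0)"
      by (rule sum.cong) auto
    hence "A$i$j = (\<Sum>m\<in>UNIV. A$i$m * (if m = j then 1 else 0))" by (simp add: sum.delta')
    also have "\<dots> = (\<Sum>m\<in>UNIV. A$i$m * (\<Sum>k\<in>UNIV. h k $ m * h k $ j))"
      by (simp only: comp[rule_format])
    also have "\<dots> = (\<Sum>m\<in>UNIV. \<Sum>k\<in>UNIV. A$i$m * h k $ m * h k $ j)"
      by (simp add: sum_distrib_left mult_ac)
    also have "\<dots> = (\<Sum>k\<in>UNIV. \<Sum>m\<in>UNIV. A$i$m * h k $ m * h k $ j)" by (rule sum.swap)
    also have "\<dots> = (\<Sum>k\<in>UNIV. (A *v h k) $ i * h k $ j)"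
      by (simp add: matrix_vector_mult_def sum_distrib_right)
    also have "\<dots> = (\<Sum>k\<in>UNIV. h k $ i * \<mu> k * h k $ j)" using eig by (simp add: mult_ac)
    finally show ?thesis .
  qed
  define Qp :: "real poly^'n^'n" where "Qp = (\<chi> i k. [:h k $ i:])"
  define Dp :: "real poly^'n^'n" where "Dp = (\<chi> k l. if k = l then [:- \<mu> k, 1:] else 0)"
  have QD: "(Qp ** Dp) $ i $ l = [:h l $ i:] * [:- \<mu> l, 1:]" for i l
  proof -
    have "(Qp ** Dp)$i$l = (\<Sum>k\<in>UNIV. smult (h k $ i) (if k = l then [:- \<mu> k, 1:] else 0))"
      by (simp add: matrix_matrix_mult_def Qp_def Dp_def)
    also have "\<dots> = (\<Sum>k\<in>UNIV. if k = l then smult (h l $ i) [:- \<mu> l, 1:] else 0)"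
      by (rule sum.cong) auto
    also have "\<dots> = smult (h l$i) [:-\<mu> l, 1:]" by (simp add: sum.delta')
    also have "\<dots> = [:h l $ i:] * [:- \<mu> l, 1:]" by simp
    finally show ?thesis .
  qed
  have X: "(\<chi> i j. (if i = j then [:0, 1:] else 0) - [:A$i$j:]) = Qp ** Dp ** transpose Qp"
  proof -
    have "(Qp ** Dp ** transpose Qp) $ i $ j = (if i = j then [:0, 1:] else 0) - [:A$i$j:]" for i j
    proof -
      have "(Qp ** Dp ** transpose Qp) $ i $ j = (\<Sum>l\<in>UNIV. [:h l $ i:] * [:- \<mu> l, 1:] * [:h l $ j:])"
      proof -
        have "(Qp ** Dp ** transpose Qp) $ i $ j = (\<Sum>l\<in>UNIV. (Qp ** Dp)$i$l * (transpose Qp)$l$j)"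
          by (simp only: matrix_matrix_mult_def[of "Qp ** Dp"] vec_lambda_beta)
        thus ?thesis by (simp only: QD) (simp add: transpose_def Qp_def)
      qed
      also have "\<dots> = (\<Sum>l\<in>UNIV. [:h l $ i * (- \<mu> l) * h l $ j, h l $ i * 1 * h l $ j:])"
        by (simp only: pprod3)
      also have "\<dots> = [:\<Sum>l\<in>UNIV. h l $ i * (- \<mu> l) * h l $ j, \<Sum>l\<in>UNIV. h l $ i * 1 * h l $ j:]"
        by (rule psum2)
      also have "\<dots> = [:- A$i$j, if i = j then 1 else 0:]"
        using comp by (simp add: Aent sum_negf)
      also have "\<dots> = (if i = j then [:0, 1:] else 0) - [:A$i$j:]" by simp
      finally show ?thesis .
    qed
    thus ?thesis by (simp add: vec_eq_iff)
  qed
  have QQ: "Qp ** transpose Qp = mat 1"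
  proof -
    have "(Qp ** transpose Qp) $ i $ j = (if i = j then 1 else 0)" for i j
    proof -
      have "(Qp ** transpose Qp) $ i $ j = (\<Sum>k\<in>UNIV. [:h k $ i * h k $ j:])"
        by (simp add: matrix_matrix_mult_def transpose_def Qp_def mult_to_poly mult.commute)
      also have "\<dots> = [:\<Sum>k\<in>UNIV. h k $ i * h k $ j:]" by (rule psum1)
      also have "\<dots> = (if i = j then 1 else 0)" using comp by simp
      finally show ?thesis .
    qed
    thus ?thesis by (simp add: vec_eq_iff mat_def)
  qed
  have "charpoly A = det (Qp ** Dp ** transpose Qp)" unfolding charpoly_def X ..
  also have "\<dots> = det Dp * (det Qp * det (transpose Qp))" by (simp add: det_mul mult_ac)
  also have "det Qp * det (transpose Qp) = 1" using QQ det_mul[of Qp "transpose Qp"] det_I by simp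
  also have "det Dp = (\<Prod>k\<in>UNIV. [:- \<mu> k, 1:])" by (subst det_diagonal) (auto simp: Dp_def)
  finally show ?thesis by simp
qed

lemma sorted_split:
  fixes R :: "real multiset"
  assumes nonneg: "\<forall>x\<in>#R. 0 \<le> x" and sz: "size R = m" and m: "m \<ge> 1"
  shows "\<forall>x\<in>#R. sorted_list_of_multiset (add_mset 0 R) ! 1 \<le> x \<and> x \<le> sorted_list_of_multiset (add_mset 0 R) ! m"
    "0 \<le> sorted_list_of_multiset (add_mset 0 R) ! 1"
    "sorted_list_of_multiset (add_mset 0 R) ! 1 \<le> sorted_list_of_multiset (add_mset 0 R) ! m"
proof -
  define ys where "ys = sorted_list_of_multiset R"
  have mys: "mset ys = R" unfolding ys_def by simp
  have sys: "set ys = set_mset R" using mys by (metis set_mset_mset)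
  have lys: "length ys = m" using mys sz by (metis size_mset)
  have sorted: "sorted ys" unfolding ys_def by simp
  have xs: "sorted_list_of_multiset (add_mset 0 R) = 0 # ys"
    unfolding sorted_list_of_multiset_insert ys_def[symmetric]
    by (rule insort_is_Cons) (use nonneg sys in auto)
  have b: "ys!0 \<le> x \<and> x \<le> ys!(m-1)" if "x \<in># R" for x
  proof -
    from that sys have "x \<in> set ys" by simp
    then obtain p where p: "p < m" "ys!p = x" using lys by (auto simp: in_set_conv_nth)
    show ?thesis using sorted_nth_mono[OF sorted, of 0 p] sorted_nth_mono[OF sorted, of p "m-1"] p lys by auto
  qed
  have "(0 # ys) ! m = ys ! (m-1)" using m by (cases m) auto
  moreover have "(0 # ys) ! 1 = ys ! 0" by simp
  moreover have "ys!0 \<in># R" using lys m sys by (metis One_nat_def le_less_trans less_numeral_extra(1) nth_mem zero_less_iff_neq_zero m not_one_le_zero)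
  ultimately show "\<forall>x\<in>#R. sorted_list_of_multiset (add_mset 0 R) ! 1 \<le> x \<and> x \<le> sorted_list_of_multiset (add_mset 0 R) ! m"
    "0 \<le> sorted_list_of_multiset (add_mset 0 R) ! 1"
    "sorted_list_of_multiset (add_mset 0 R) ! 1 \<le> sorted_list_of_multiset (add_mset 0 R) ! m"
    using b nonneg xs by auto
qed

lemma mem_sum_single: "finite K \<Longrightarrow> x \<in># (\<Sum>k\<in>K. {#f k#}) \<longleftrightarrow> (\<exists>k\<in>K. x = f k)"
  by (induction K rule: finite_induct) auto

lemma proots_diag:
  fixes \<mu> :: "'n::finite \<Rightarrow> real"
  shows "proots (\<Prod>k\<in>UNIV. [:- \<mu> k, 1:]) = add_mset (\<mu> k0) (\<Sum>k\<in>UNIV-{k0}. {#\<mu> k#})"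
proof -
  have "proots (\<Prod>k\<in>UNIV. [:- \<mu> k, 1:]) = (\<Sum>k\<in>UNIV. proots [:- \<mu> k, 1:])"
    by (rule proots_prod) simp
  also have "\<dots> = (\<Sum>k\<in>UNIV. {#\<mu> k#})" by (simp add: proots_linear_factor)
  also have "\<dots> = {#\<mu> k0#} + (\<Sum>k\<in>UNIV-{k0}. {#\<mu> k#})" by (simp add: sum.remove)
  finally show ?thesis by simp
qed

lemma contraction_bound:
  fixes a b \<mu> :: real
  assumes "0 \<le> a" "a \<le> \<mu>" "\<mu> \<le> b" "0 < a + b"
  shows "(1 - 2 / (a + b) * \<mu>)^2 \<le> ((b - a) / (b + a))^2"
proof -
  have e1: "1 - 2 / (a + b) * \<mu> = (a + b - 2*\<mu>) / (a + b)" using assms by (simp add: field_simps)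
  have e2: "(b - a) / (b + a) = (b - a) / (a + b)" by (simp add: add.commute)
  have "(a + b - 2*\<mu>)^2 \<le> (b - a)^2"
  proof -
    have "(b - a)^2 - (a + b - 2*\<mu>)^2 = 4 * (\<mu> - a) * (b - \<mu>)" by (simp add: power2_eq_square algebra_simps)
    moreover have "4 * (\<mu> - a) * (b - \<mu>) \<ge> 0" using assms by simp
    ultimately show ?thesis by linarith
  qed
  hence "(a + b - 2*\<mu>)^2 / (a+b)^2 \<le> (b - a)^2 / (a+b)^2"
    by (rule divide_right_mono) simp
  thus ?thesis unfolding e1 e2 by (simp add: power_divide)
qed

lemma main_abstract:
  fixes A :: "real^'n^'n" and h :: "'n \<Rightarrow> real^'n" and S T :: "'n set"
  assumes sym: "transpose A = A" and a1: "A *v vec 1 = 0"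
    and eig: "\<forall>k. A *v h k = \<mu> k *\<^sub>R h k"
    and hk0: "h k0 = (1 / sqrt (real CARD('n))) *\<^sub>R vec 1" and mu0: "\<mu> k0 = 0"
    and comp: "\<forall>i j. (\<Sum>k\<in>UNIV. h k $ i * h k $ j) = (if i = j then 1 else 0)"
    and bnd: "\<forall>k. k \<noteq> k0 \<longrightarrow> a \<le> \<mu> k \<and> \<mu> k \<le> b" and ab: "0 \<le> a" "a \<le> b" "0 < a + b"
    and supp: "\<forall>i j. i \<notin> T \<longrightarrow> j \<in> S \<longrightarrow> A$i$j = 0" and ST: "S \<subseteq> T"
  shows "real (card S)^2 \<le> real (card T) * (real (card S)^2 / real CARD('n)
      + ((b - a) / (b + a))^2 * (real (card S) - real (card S)^2 / real CARD('n)))"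
proof -
  define N where "N = real CARD('n)"
  have N: "N > 0" unfolding N_def by simp
  define s where "s = real (card S)"
  define r where "r = (b - a) / (b + a)"
  define t where "t = 2 / (a + b)"
  define x :: "real^'n" where "x = (\<chi> i. if i \<in> S then 1 else 0)"
  define z where "z = x - t *\<^sub>R (A *v x)"
  have pars: "v \<bullet> w = (\<Sum>k\<in>UNIV. (v \<bullet> h k) * (w \<bullet> h k))" for v w by (rule parseval) (use comp in auto)
  have cS: "(\<Sum>i\<in>UNIV. (if i \<in> S then 1 else 0 :: real)) = s" unfolding s_def
    by (simp add: sum.If_cases)
  have xx: "x \<bullet> x = s" unfolding x_def using cS by (simp add: inner_vec_def if_distrib cong: if_cong)
  have x1: "x \<bullet> vec 1 = s" unfolding x_def using cS by (simp add: inner_vec_def)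
  have xh0: "x \<bullet> h k0 = s / sqrt N" unfolding hk0 N_def using x1 by simp
  have zsum: "(\<Sum>i\<in>UNIV. z $ i) = s"
  proof -
    have "(\<Sum>i\<in>UNIV. z $ i) = z \<bullet> vec 1" by (simp add: inner_vec_def)
    also have "\<dots> = x \<bullet> vec 1 - t * ((A *v x) \<bullet> vec 1)" unfolding z_def by (simp add: inner_diff_left)
    also have "(A *v x) \<bullet> vec 1 = x \<bullet> (A *v vec 1)" by (rule sym_inner[OF sym])
    finally show ?thesis using a1 x1 by simp
  qed
  have zout: "z $ i = 0" if "i \<notin> T" for i
  proof -
    have "x $ i = 0" using that ST unfolding x_def by auto
    moreover have "(A *v x) $ i = 0"
      unfolding matrix_vector_mult_def x_def using supp that by (auto intro!: sum.neutral)
    ultimately show ?thesis unfolding z_def by simp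
  qed
  have "(\<Sum>i\<in>UNIV. z $ i) = (\<Sum>i\<in>T. z $ i)"
    by (rule sum.mono_neutral_right) (use zout in auto)
  hence "s^2 = (\<Sum>i\<in>T. z $ i)^2" using zsum by simp
  also have "\<dots> \<le> (\<Sum>i\<in>T. (z $ i)^2) * real (card T)" by (rule sum_squared_le_sum_of_squares)
  also have "(\<Sum>i\<in>T. (z $ i)^2) \<le> (\<Sum>i\<in>UNIV. (z $ i)^2)" by (rule sum_mono2) auto
  hence "(\<Sum>i\<in>T. (z $ i)^2) * real (card T) \<le> (z \<bullet> z) * real (card T)"
    by (simp add: inner_vec_def power2_eq_square mult_right_mono)
  finally have step1: "s^2 \<le> (z \<bullet> z) * real (card T)" .
  have zh: "z \<bullet> h k = (1 - t * \<mu> k) * (x \<bullet> h k)" for k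
  proof -
    have "(A *v x) \<bullet> h k = x \<bullet> (A *v h k)" by (rule sym_inner[OF sym])
    also have "\<dots> = \<mu> k * (x \<bullet> h k)" using eig by simp
    finally show ?thesis unfolding z_def by (simp add: inner_diff_left algebra_simps)
  qed
  have "z \<bullet> z = (\<Sum>k\<in>UNIV. (z \<bullet> h k)^2)" using pars[of z z] by (simp add: power2_eq_square)
  also have "\<dots> = (z \<bullet> h k0)^2 + (\<Sum>k\<in>UNIV-{k0}. (z \<bullet> h k)^2)" by (simp add: sum.remove)
  also have "(\<Sum>k\<in>UNIV-{k0}. (z \<bullet> h k)^2) \<le> (\<Sum>k\<in>UNIV-{k0}. r^2 * (x \<bullet> h k)^2)"
  proof (rule sum_mono)
    fix k assume "k \<in> UNIV - {k0}"
    hence "a \<le> \<mu> k" "\<mu> k \<le> b" using bnd by auto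
    hence "(1 - t * \<mu> k)^2 \<le> r^2" unfolding t_def r_def using contraction_bound ab by blast
    thus "(z \<bullet> h k)^2 \<le> r^2 * (x \<bullet> h k)^2" unfolding zh power_mult_distrib
      by (simp add: mult_right_mono)
  qed
  also have "(\<Sum>k\<in>UNIV-{k0}. r^2 * (x \<bullet> h k)^2) = r^2 * (s - s^2 / N)"
  proof -
    have "x \<bullet> x = (\<Sum>k\<in>UNIV. (x \<bullet> h k)^2)" using pars[of x x] by (simp add: power2_eq_square)
    also have "\<dots> = (x \<bullet> h k0)^2 + (\<Sum>k\<in>UNIV-{k0}. (x \<bullet> h k)^2)" by (simp add: sum.remove)
    finally have "(\<Sum>k\<in>UNIV-{k0}. (x \<bullet> h k)^2) = s - s^2 / N"
      using xx xh0 N by (simp add: power_divide)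
    moreover have "(\<Sum>k\<in>UNIV-{k0}. r^2 * (x \<bullet> h k)^2) = r^2 * (\<Sum>k\<in>UNIV-{k0}. (x \<bullet> h k)^2)"
      by (rule sum_distrib_left[symmetric])
    ultimately show ?thesis by simp
  qed
  also have "z \<bullet> h k0 = s / sqrt N" using zh[of k0] mu0 xh0 by simp
  finally have step2: "z \<bullet> z \<le> s^2 / N + r^2 * (s - s^2 / N)" using N by (simp add: power_divide)
  have "s^2 \<le> real (card T) * (z \<bullet> z)" using step1 by (simp add: mult.commute)
  also have "\<dots> \<le> real (card T) * (s^2 / N + r^2 * (s - s^2 / N))"
    using step2 by (simp add: mult_left_mono)
  finally show ?thesis unfolding s_def r_def N_def .
qed

lemma final_alg:
  fixes s N bd c :: real
  assumes s: "s > 0" and sN: "s \<le> N" and c: "0 \<le> c" "c \<le> 1" and bd: "bd \<ge> 0"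
    and main: "s^2 \<le> (s + bd) * (s^2/N + c*(s - s^2/N))"
  shows "(N - s) * (1 - c) / (c * (N - s) + s) \<le> bd / s"
    and "2 * s \<le> N \<Longrightarrow> (1 - c) / (1 + c) \<le> bd / s"
proof -
  have N: "N > 0" using s sN by simp
  define D where "D = c * (N - s) + s"
  have D: "D > 0" unfolding D_def using s sN c by (simp add: add_nonneg_pos)
  have "s^2 * N \<le> (s + bd) * (s^2/N + c*(s - s^2/N)) * N" using main N by (simp add: mult_right_mono)
  also have "(s + bd) * (s^2/N + c*(s - s^2/N)) * N = (s + bd) * s * D"
    unfolding D_def using N by (simp add: field_simps power2_eq_square)
  finally have "s * (s * N) \<le> s * ((s + bd) * D)" by (simp add: power2_eq_square mult_ac)
  hence k: "s * N \<le> (s + bd) * D" using s by simp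
  have k2: "(N - s) * (1 - c) * s \<le> bd * D"
  proof -
    have "(N - s) * (1 - c) * s = s * (N - D)" unfolding D_def by (simp add: algebra_simps)
    also have "\<dots> \<le> bd * D" using k by (simp add: algebra_simps)
    finally show ?thesis .
  qed
  show g1: "(N - s) * (1 - c) / (c * (N - s) + s) \<le> bd / s"
    using k2 D s unfolding D_def[symmetric] by (simp add: divide_le_eq le_divide_eq mult.commute)
  assume h: "2 * s \<le> N"
  have "(1 - c) / (1 + c) \<le> (N - s) * (1 - c) / D"
  proof -
    have "(1 - c) * D \<le> (N - s) * (1 - c) * (1 + c)"
    proof -
      have "(N - s) * (1 - c) * (1 + c) - (1 - c) * D = (1 - c) * (N - 2 * s)"
        unfolding D_def by (simp add: algebra_simps)
      moreover have "(1 - c) * (N - 2 * s) \<ge> 0" using c h by simp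
      ultimately show ?thesis by linarith
    qed
    thus ?thesis using D c by (simp add: divide_le_eq le_divide_eq mult.commute mult.left_commute)
  qed
  also have "\<dots> \<le> bd / s" using g1 unfolding D_def .
  finally show "(1 - c) / (1 + c) \<le> bd / s" .
qed

theorem corollary4:
  fixes E :: "'a::finite set set" and S :: "'a set"
  defines "n \<equiv> CARD('a)"
  defines "L \<equiv> hg_laplacian E"
  defines "lam \<equiv> 2 * eig L 2 / (eig L n + eig L 2)"
  assumes "hypergraph E"
    and "hg_connected E"
    and "\<exists>i j. i \<noteq> j \<and> \<not> hg_adj E i j"
    and "S \<noteq> {}"
  shows "real (card (vertex_boundary E S)) / real (card S)
           \<ge> real (n - card S) * (1 - (1 - lam)^2)
               / ((1 - lam)^2 * real (n - card S) + real (card S))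
         \<and> (real (card S) \<le> real n / 2 \<longrightarrow>
         real (card (vertex_boundary E S)) / real (card S)
           \<ge> 2 * eig L n * eig L 2 / ((eig L n)^2 + (eig L 2)^2))"
proof -
  note hg = assms(4)
  have symL: "transpose L = L" unfolding L_def by (rule lap_sym)
  have rs: "\<And>i. (\<Sum>j\<in>UNIV. L$i$j) = 0" unfolding L_def using lap_rowsum[OF hg] .
  have off: "\<And>i j. i \<noteq> j \<Longrightarrow> L$i$j \<le> 0" unfolding L_def using lap_offdiag_nonpos[OF hg] .
  have a1: "L *v vec 1 = 0" by (rule rowsum_one[OF rs])
  obtain h :: "'a \<Rightarrow> real^'a" and \<mu> k0 where
    ortho: "\<forall>k l. h k \<bullet> h l = (if k = l then 1 else 0)" and
    eigv: "\<forall>k. L *v h k = \<mu> k *\<^sub>R h k" and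
    hk0: "h k0 = (1 / sqrt (real CARD('a))) *\<^sub>R vec 1" and mu0: "\<mu> k0 = 0" and
    comp: "\<forall>i j. (\<Sum>k\<in>UNIV. h k $ i * h k $ j) = (if i = j then 1 else 0)"
    using eigen_setup[OF symL a1] by blast
  have munn: "\<mu> k \<ge> 0" for k
  proof -
    have "h k \<bullet> (L *v h k) = \<mu> k" using eigv ortho by simp
    moreover have "h k \<bullet> (L *v h k) \<ge> 0" by (rule psd_lemma[OF symL rs off])
    ultimately show ?thesis by simp
  qed
  define R where "R = (\<Sum>k\<in>UNIV-{k0}. {#\<mu> k#})"
  have pr: "proots (charpoly L) = add_mset 0 R"
    unfolding charpoly_diag[OF eigv comp] R_def using proots_diag[of \<mu> k0] mu0 by simp
  obtain i0 j0 :: 'a where ij: "i0 \<noteq> j0" using assms(6) by blast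
  have "card {i0, j0} \<le> n" unfolding n_def by (rule card_mono) auto
  hence n2: "n \<ge> 2" using ij by simp
  have szR: "size R = n - 1" unfolding R_def n_def by (simp add: size_multiset_sum)
  define a where "a = eig L 2"
  define b where "b = eig L n"
  have a_eq: "a = sorted_list_of_multiset (add_mset 0 R) ! 1"
    unfolding a_def eig_def eigenvalues_sorted_def pr by simp
  have b_eq: "b = sorted_list_of_multiset (add_mset 0 R) ! (n - 1)"
    unfolding b_def eig_def eigenvalues_sorted_def pr by simp
  have Rnn: "\<forall>x\<in>#R. 0 \<le> x" unfolding R_def using munn by (auto simp: mem_sum_single)
  note ss = sorted_split[OF Rnn szR, folded a_eq b_eq]
  have ss1: "\<forall>x\<in>#R. a \<le> x \<and> x \<le> b" and a0: "0 \<le> a" and ab: "a \<le> b" using ss n2 by auto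
  have bnd: "\<forall>k. k \<noteq> k0 \<longrightarrow> a \<le> \<mu> k \<and> \<mu> k \<le> b"
  proof (intro allI impI)
    fix k assume "k \<noteq> k0"
    hence "\<mu> k \<in># R" unfolding R_def by (auto simp: mem_sum_single)
    thus "a \<le> \<mu> k \<and> \<mu> k \<le> b" using ss1 by blast
  qed
  define D where "D = vertex_boundary E S"
  define T where "T = S \<union> D"
  have disj: "S \<inter> D = {}" unfolding D_def vertex_boundary_def by auto
  have cardT: "card T = card S + card D" unfolding T_def using disj by (simp add: card_Un_disjoint)
  have supp: "\<forall>i j. i \<notin> T \<longrightarrow> j \<in> S \<longrightarrow> L$i$j = 0"
  proof (intro allI impI)
    fix i j assume i: "i \<notin> T" and j: "j \<in> S"
    hence ij: "i \<noteq> j" unfolding T_def by auto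
    have "\<not> hg_adj E i j"
    proof
      assume "hg_adj E i j"
      hence "hg_adj E j i" unfolding hg_adj_def by auto
      hence "i \<in> D" using i j unfolding D_def vertex_boundary_def T_def by auto
      thus False using i unfolding T_def by auto
    qed
    thus "L$i$j = 0" unfolding L_def using lap_nonadj ij by blast
  qed
  have ST: "S \<subseteq> T" unfolding T_def by auto
  define s where "s = real (card S)"
  have s0: "s > 0" unfolding s_def using assms(7) by (simp add: card_gt_0_iff)
  have sn: "card S \<le> n" unfolding n_def by (rule card_mono) auto
  have sN: "s \<le> real n" unfolding s_def using sn by simp
  have nd: "real (n - card S) = real n - s" unfolding s_def using sn by (simp add: of_nat_diff)
  show ?thesis
  proof (cases "a + b = 0")
    case True
    hence a00: "a = 0" "b = 0" using a0 ab by auto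
    have lam0: "lam = 0" unfolding lam_def using a00 a_def b_def by simp
    have "0 \<le> real (card (vertex_boundary E S)) / real (card S)" by simp
    thus ?thesis using a00 lam0 unfolding a_def b_def by simp
  next
    case False
    hence apb: "0 < a + b" using a0 ab by simp
    define c where "c = ((b - a) / (b + a))^2"
    have main: "s^2 \<le> real (card T) * (s^2 / real n + c * (s - s^2 / real n))"
      using main_abstract[OF symL a1 eigv hk0 mu0 comp bnd a0 ab apb supp ST]
      unfolding s_def c_def n_def .
    have lamc: "(1 - lam)^2 = c" unfolding c_def lam_def a_def[symmetric] b_def[symmetric]
      using apb by (simp add: field_simps)
    have c0: "0 \<le> c" unfolding c_def by simp
    have c1: "c \<le> 1"
    proof -
      have "(b - a) / (b + a) \<le> 1" using apb a0 ab by (simp add: divide_le_eq add.commute)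
      moreover have "0 \<le> (b - a) / (b + a)" using apb ab by (simp add: add.commute)
      ultimately show ?thesis unfolding c_def by (simp add: power_le_one)
    qed
    define bd where "bd = real (card D)"
    have main': "s^2 \<le> (s + bd) * (s^2 / real n + c * (s - s^2 / real n))"
      using main unfolding cardT bd_def s_def by simp
    note fa = final_alg[OF s0 sN c0 c1 _ main'] 
    have bd0: "bd \<ge> 0" unfolding bd_def by simp
    have r1: "(real n - s) * (1 - c) / (c * (real n - s) + s) \<le> bd / s" using fa(1)[OF bd0] .
    have cc: "(1 - c) / (1 + c) = 2 * b * a / (b^2 + a^2)"
    proof -
      have ne: "b + a \<noteq> 0" using apb by simp
      have bpos: "b > 0" using apb ab by linarith
      have ne2: "b^2 + a^2 > 0" using bpos by (intro add_pos_nonneg) auto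
      have ne3: "(b + a)^2 + (b - a)^2 \<noteq> 0" using apb by (simp add: add_pos_nonneg)
      define p where "p = (b + a)^2"
      define q where "q = (b - a)^2"
      have p: "p > 0" unfolding p_def using ne by simp
      have q: "q \<ge> 0" unfolding q_def by simp
      have "c = q / p" unfolding c_def p_def q_def by (simp add: power_divide)
      hence "(1 - c) / (1 + c) = (p - q) / (p + q)" using p q c0
        by (simp add: divide_simps) (simp add: algebra_simps)
      moreover have "p - q = 2 * (2 * b * a)" unfolding p_def q_def by (simp add: power2_eq_square algebra_simps)
      moreover have "p + q = 2 * (b^2 + a^2)" unfolding p_def q_def by (simp add: power2_eq_square algebra_simps)
      ultimately have "(1 - c) / (1 + c) = (2 * (2 * b * a)) / (2 * (b^2 + a^2))" by simp
      also have "\<dots> = (2 * b * a) / (b^2 + a^2)" by (rule mult_divide_mult_cancel_left) simp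
      finally show ?thesis .
    qed
    show ?thesis
    proof (intro conjI impI)
      show "real (n - card S) * (1 - (1 - lam)^2) / ((1 - lam)^2 * real (n - card S) + real (card S))
          \<le> real (card (vertex_boundary E S)) / real (card S)"
        using r1 unfolding nd lamc bd_def D_def s_def .
      assume "real (card S) \<le> real n / 2"
      hence "2 * s \<le> real n" unfolding s_def by simp
      hence "(1 - c) / (1 + c) \<le> bd / s" using fa(2)[OF bd0] by blast
      thus "2 * eig L n * eig L 2 / ((eig L n)^2 + (eig L 2)^2)
          \<le> real (card (vertex_boundary E S)) / real (card S)"
        unfolding cc a_def[symmetric] b_def[symmetric] bd_def D_def s_def .
    qed
  qed
qed

end
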